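(* Let $\mathcal{B}$ be a prime Banach algebra over $\mathbb{R}$ or $\mathbb{C}$, and let $\mathcal{H}_1,\mathcal{H}_2$ be non-empty open subsets of $\mathcal{B}$. Suppose $\mathcal{B}$ admits a continuous automorphism $f$ such that for every $(x,y)\in\mathcal{H}_1\times\mathcal{H}_2$ there exist positive integers $p=p(x,y)$, $q=q(x,y)$ (depending on $x$ and $y$) with $$f(x^{p}y^{q})+x^{p}\circ y^{q}\in Z(\mathcal{B}).$$ Then $\mathcal{B}$ is commutative.
   Context: $Z(\mathcal{B})$ denotes the center of $\mathcal{B}$. For $x,y\in\mathcal{B}$, $x\circ y=xy+yx$ and $[x,y]=xy-yx$. $\mathcal{B}$ is prime if $x\mathcal{B}y=\{0\}$ implies $x=0$ or $y=0$. An automorphism of $\mathcal{B}$ is a bijective map $f:\mathcal{B}\to\mathcal{B}$ with $f(x+y)=f(x)+f(y)$ and $f(xy)=f(x)f(y)$ for all $x,y$. *)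

theory Defs
  imports "HOL-Analysis.Analysis"
begin

text \<open>Positive powers x^n (n >= 1) in a possibly non-unital algebra.
  The value at n = 0 is irrelevant (only used with n > 0).\<close>
fun ppow :: "'a::{times,zero} \<Rightarrow> nat \<Rightarrow> 'a" where
  "ppow x 0 = 0"
| "ppow x (Suc 0) = x"
| "ppow x (Suc (Suc n)) = x * ppow x (Suc n)"

definition center :: "'a::times set" where
  "center = {z. \<forall>x. z * x = x * z}"

definition jordan :: "'a::{times,plus} \<Rightarrow> 'a \<Rightarrow> 'a" where
  "jordan x y = x * y + y * x"

definition prime_alg :: "'a::{times,zero} itself \<Rightarrow> bool" where
  "prime_alg _ \<longleftrightarrow> (\<forall>x y::'a. (\<forall>z. x * z * y = 0) \<longrightarrow> x = 0 \<or> y = 0)"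

definition automorphism :: "('a::{plus,times} \<Rightarrow> 'a) \<Rightarrow> bool" where
  "automorphism f \<longleftrightarrow> bij f \<and> (\<forall>x y. f (x + y) = f x + f y) \<and> (\<forall>x y. f (x * y) = f x * f y)"

end

theory Submission
  imports Defs
begin




lemma ppow_Suc_Suc: "ppow (x::'a::{times,zero}) (Suc (Suc n)) = x * ppow x (Suc n)" by simp

lemma ppow_add_Suc:
  fixes x :: "'a::real_normed_algebra"
  shows "ppow x (Suc m) * ppow x (Suc n) = ppow x (Suc m + Suc n)"
  by (induction m) (auto simp: mult.assoc)

lemma ppow_add:
  fixes x :: "'a::real_normed_algebra"
  shows "0 < m \<Longrightarrow> 0 < n \<Longrightarrow> ppow x m * ppow x n = ppow x (m + n)"
  using ppow_add_Suc[of x "m - 1" "n - 1"] by simp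

lemma ppow_mult:
  fixes x :: "'a::real_normed_algebra"
  assumes "0 < m" shows "0 < n \<Longrightarrow> ppow (ppow x m) n = ppow x (m * n)"
proof (induction n rule: nat_less_induct)
  case (1 n)
  show ?case
  proof (cases n)
    case 0 then show ?thesis using 1 by simp
  next
    case (Suc k)
    show ?thesis
    proof (cases k)
      case 0 then show ?thesis using Suc by simp
    next
      case (Suc j)
      have "ppow (ppow x m) n = ppow x m * ppow (ppow x m) k" using Suc \<open>n = Suc k\<close> by simp
      also have "\<dots> = ppow x m * ppow x (m*k)" using 1 Suc \<open>n = Suc k\<close> by simp
      also have "\<dots> = ppow x (m + m*k)" using assms Suc by (simp add: ppow_add)
      finally show ?thesis using \<open>n = Suc k\<close> by simp
    qed
  qed
qed

lemma ppow_comm: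
  fixes x :: "'a::real_normed_algebra"
  shows "0 < m \<Longrightarrow> 0 < n \<Longrightarrow> ppow x m * ppow x n = ppow x n * ppow x m"
  by (simp add: ppow_add add.commute)

lemma ppow_hom:
  assumes "\<forall>x y. f (x * y) = f x * f y" "f 0 = 0"
  shows "f (ppow x n) = ppow (f x) n"
  by (induction x n rule: ppow.induct) (auto simp: assms)

lemma center_iff: "z \<in> center \<longleftrightarrow> (\<forall>x. z * x = x * z)"
  by (simp add: center_def)

lemma center_zero: "(0::'a::real_normed_algebra) \<in> center"
  by (simp add: center_def)

lemma center_add: "(a::'a::real_normed_algebra) \<in> center \<Longrightarrow> b \<in> center \<Longrightarrow> a + b \<in> center"
  unfolding center_iff by (metis distrib_left distrib_right)

lemma center_diff: "(a::'a::real_normed_algebra) \<in> center \<Longrightarrow> b \<in> center \<Longrightarrow> a - b \<in> center"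
  unfolding center_iff by (metis left_diff_distrib right_diff_distrib)

lemma center_mult: "(a::'a::real_normed_algebra) \<in> center \<Longrightarrow> b \<in> center \<Longrightarrow> a * b \<in> center"
  unfolding center_iff by (metis mult.assoc)

lemma center_scaleR_iff: "r \<noteq> 0 \<Longrightarrow> (r *\<^sub>R (a::'a::real_normed_algebra) \<in> center) = (a \<in> center)"
  by (simp add: center_def)

lemma prime_cancel:
  fixes z :: "'a::real_normed_algebra"
  assumes "prime_alg TYPE('a)" "z \<in> center" "z \<noteq> 0" "z * r = 0"
  shows "r = 0"
proof -
  have "\<forall>w. z * w * r = 0"
    using assms(2,4) by (metis center_iff mult.assoc mult_zero_right)
  then show ?thesis using assms(1,3) unfolding prime_alg_def by blast
qed



lemma scaleR_four: "(4::real) *\<^sub>R (y::'a::real_vector) = y + y + (y + y)"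
  by (metis add.commute mult_2 numeral_Bit0 one_add_one scaleR_add_left scaleR_one)

lemma comm_central:
  fixes a b :: "'a::real_normed_algebra"
  assumes "\<alpha> \<in> center" "\<beta> \<in> center" "fa = \<alpha> - (a + a)" "fb = \<beta> - (b + b)"
    "fa * fb + (a * b + b * a) \<in> center" "fb * fa + (b * a + a * b) \<in> center"
  shows "a * b - b * a \<in> center"
proof -
  have X: "fa * fb - fb * fa \<in> center"
    using center_diff[OF assms(5,6)] by (simp add: algebra_simps)
  have ab: "\<alpha> * b = b * \<alpha>" "\<beta> * a = a * \<beta>" "\<alpha> * \<beta> = \<beta> * \<alpha>"
    using assms(1,2) by (metis center_iff)+
  have e: "fa * fb - fb * fa = 4 *\<^sub>R (a * b - b * a)"
    unfolding assms(3,4) 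
    unfolding scaleR_four by (simp add: ring_distribs ab)
  then show ?thesis using X center_scaleR_iff[of 4 "a * b - b * a"] by simp
qed
lemma comm_from_center:
  fixes a b :: "'a::real_normed_algebra"
  assumes prime: "prime_alg TYPE('a)"
    and c: "a * b - b * a \<in> center" and c2: "(a * a) * b - b * (a * a) \<in> center"
  shows "a * b = b * a"
proof (rule ccontr)
  assume ne: "a * b \<noteq> b * a"
  define c where "c = a * b - b * a"
  have cc: "\<And>x. c * x = x * c" using c unfolding c_def center_iff by blast
  have "(a * a) * b - b * (a * a) = c * a + c * a"
  proof -
    have "(a * a) * b - b * (a * a) = a * (a * b) - (b * a) * a" by (simp add: mult.assoc)
    also have "\<dots> = a * (b * a + c) - (a * b - c) * a" by (simp add: c_def)
    also have "\<dots> = a * c + c * a" by (simp add: algebra_simps)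
    also have "\<dots> = c * a + c * a" by (simp add: cc)
    finally show ?thesis .
  qed
  with c2 have "c * a + c * a \<in> center" by simp
  then have "2 *\<^sub>R (c * a) \<in> center" by (simp add: scaleR_2)
  then have "c * a \<in> center" using center_scaleR_iff[of 2 "c * a"] by simp
  then have "\<And>r. c * (a * r - r * a) = 0"
  proof -
    fix r
    assume h: "c * a \<in> center"
    have "c * a * r = r * (c * a)" using h center_iff by blast
    also have "\<dots> = c * (r * a)" by (metis cc mult.assoc)
    finally show "c * (a * r - r * a) = 0" by (simp add: right_diff_distrib mult.assoc)
  qed
  moreover have "c \<noteq> 0" using ne by (simp add: c_def)
  moreover have "c \<in> center" using c c_def by simp
  ultimately have "\<And>r. a * r - r * a = 0" using prime_cancel[OF prime, of c] by metis
  then show False using ne by (metis right_minus_eq)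
qed

lemma G_lemma:
  fixes f :: "'a::real_normed_algebra \<Rightarrow> 'a" and w :: 'a
  assumes pq: "0 < p" "0 < q"
    and H: "\<forall>x y. f (ppow x p * ppow y q) + jordan (ppow x p) (ppow y q) \<in> center"
  shows "f (ppow w (p*q*(p+q))) + (ppow w (p*q*(p+q)) + ppow w (p*q*(p+q))) \<in> center"
proof -
  let ?x = "ppow w (p*q)"
  have pos: "0 < p*q" using pq by simp
  have 1: "ppow ?x p = ppow w (p*q*p)" using ppow_mult[OF pos pq(1)] .
  have 2: "ppow ?x q = ppow w (p*q*q)" using ppow_mult[OF pos pq(2)] .
  have 3: "ppow w (p*q*p) * ppow w (p*q*q) = ppow w (p*q*(p+q))"
    using ppow_add[of "p*q*p" "p*q*q" w] pq by (simp add: add_mult_distrib2)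
  have 4: "ppow w (p*q*q) * ppow w (p*q*p) = ppow w (p*q*(p+q))"
    using ppow_add[of "p*q*q" "p*q*p" w] pq by (simp add: add_mult_distrib2 add.commute)
  show ?thesis using H[rule_format, of ?x ?x] unfolding jordan_def 1 2 3 4 .
qed

lemma P_lemma:
  fixes f :: "'a::real_normed_algebra \<Rightarrow> 'a" and u v :: 'a
  assumes pq: "0 < p" "0 < q"
    and H: "\<forall>x y. f (ppow x p * ppow y q) + jordan (ppow x p) (ppow y q) \<in> center"
  shows "f (ppow u (p*q*(p+q)) * ppow v (p*q*(p+q))) + (ppow u (p*q*(p+q)) * ppow v (p*q*(p+q)) + ppow v (p*q*(p+q)) * ppow u (p*q*(p+q))) \<in> center"
proof -
  have 1: "ppow (ppow u (q*(p+q))) p = ppow u (p*q*(p+q))"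
    using ppow_mult[of "q*(p+q)" p u] pq by (simp add: mult.commute mult.left_commute)
  have 2: "ppow (ppow v (p*(p+q))) q = ppow v (p*q*(p+q))"
    using ppow_mult[of "p*(p+q)" q v] pq by (simp add: mult.commute mult.left_commute)
  show ?thesis using H[rule_format, of "ppow u (q*(p+q))" "ppow v (p*(p+q))"] unfolding jordan_def 1 2 .
qed

lemma comm_powers:
  fixes f :: "'a::real_normed_algebra \<Rightarrow> 'a" and u v :: 'a
  assumes prime: "prime_alg TYPE('a)" and fm: "\<forall>x y. f (x * y) = f x * f y"
    and pq: "0 < p" "0 < q"
    and H: "\<forall>x y. f (ppow x p * ppow y q) + jordan (ppow x p) (ppow y q) \<in> center"
  shows "ppow u (p*q*(p+q)) * ppow v (p*q*(p+q)) = ppow v (p*q*(p+q)) * ppow u (p*q*(p+q))"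
proof -
  let ?E = "p*q*(p+q)"
  have Epos: "0 < ?E" using pq by simp
  have cc: "ppow u' ?E * ppow v' ?E - ppow v' ?E * ppow u' ?E \<in> center" for u' v' :: 'a
  proof -
    let ?A = "ppow u' ?E" and ?B = "ppow v' ?E"
    have c1: "f ?A + (?A + ?A) \<in> center" by (rule G_lemma[OF pq H])
    have c2: "f ?B + (?B + ?B) \<in> center" by (rule G_lemma[OF pq H])
    have c3: "f ?A * f ?B + (?A * ?B + ?B * ?A) \<in> center"
      using P_lemma[OF pq H, of u' v'] fm by simp
    have c4: "f ?B * f ?A + (?B * ?A + ?A * ?B) \<in> center"
      using P_lemma[OF pq H, of v' u'] fm by simp
    have e1: "f ?A = (f ?A + (?A + ?A)) - (?A + ?A)" by simp
    have e2: "f ?B = (f ?B + (?B + ?B)) - (?B + ?B)" by simp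
    show ?thesis by (rule comm_central[OF c1 c2 e1 e2 c3 c4])
  qed
  have sq: "ppow (ppow u 2) ?E = ppow u ?E * ppow u ?E"
    using ppow_mult[of 2 ?E u] ppow_add[OF Epos Epos, of u] Epos by (simp add: mult_2)
  show ?thesis
    using comm_from_center[OF prime cc[of u v]] cc[of "ppow u 2" v] unfolding sq by blast
qed




fun dpow :: "'a::real_normed_algebra \<Rightarrow> 'a \<Rightarrow> nat \<Rightarrow> 'a" where
  "dpow x y 0 = 0"
| "dpow x y (Suc 0) = y"
| "dpow x y (Suc (Suc n)) = y * ppow x (Suc n) + x * dpow x y (Suc n)"

lemma ppow_deriv:
  fixes x y :: "'a::real_normed_algebra"
  shows "((\<lambda>t::real. ppow (x + t *\<^sub>R y) n) has_derivative (\<lambda>h. h *\<^sub>R dpow x y n)) (at 0)"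
proof (induction n rule: nat_less_induct)
  case (1 n)
  show ?case
  proof (cases n)
    case 0 then show ?thesis by simp
  next
    case (Suc k)
    show ?thesis
    proof (cases k)
      case 0
      then show ?thesis using Suc
        by (auto intro!: derivative_eq_intros)
    next
      case (Suc j)
      have IH: "((\<lambda>t::real. ppow (x + t *\<^sub>R y) (Suc j)) has_derivative (\<lambda>h. h *\<^sub>R dpow x y (Suc j))) (at 0)"
        using 1 Suc \<open>n = Suc k\<close> by simp
      have L: "((\<lambda>t::real. x + t *\<^sub>R y) has_derivative (\<lambda>h. h *\<^sub>R y)) (at 0)"
        by (auto intro!: derivative_eq_intros)
      have "((\<lambda>t::real. (x + t *\<^sub>R y) * ppow (x + t *\<^sub>R y) (Suc j)) has_derivative
          (\<lambda>h. (x + 0 *\<^sub>R y) * (h *\<^sub>R dpow x y (Suc j)) + (h *\<^sub>R y) * ppow (x + 0 *\<^sub>R y) (Suc j))) (at 0)"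
        by (rule has_derivative_mult[OF L IH])
      then have "((\<lambda>t::real. (x + t *\<^sub>R y) * ppow (x + t *\<^sub>R y) (Suc j)) has_derivative
          (\<lambda>h. h *\<^sub>R dpow x y n)) (at 0)"
        by (rule has_derivative_eq_rhs) (auto simp: algebra_simps Suc \<open>n = Suc k\<close>)
      moreover have "(\<lambda>t::real. ppow (x + t *\<^sub>R y) n) = (\<lambda>t::real. (x + t *\<^sub>R y) * ppow (x + t *\<^sub>R y) (Suc j))"
        using Suc \<open>n = Suc k\<close> by simp
      ultimately show ?thesis by simp
    qed
  qed
qed

lemma deriv_comm:
  fixes x y b :: "'a::real_normed_algebra"
  assumes "\<forall>t::real. ppow (x + t *\<^sub>R y) n * b = b * ppow (x + t *\<^sub>R y) n"
  shows "dpow x y n * b = b * dpow x y n"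
proof -
  have d: "((\<lambda>t::real. ppow (x + t *\<^sub>R y) n * b - b * ppow (x + t *\<^sub>R y) n) has_derivative
      (\<lambda>h. (h *\<^sub>R dpow x y n) * b - b * (h *\<^sub>R dpow x y n))) (at 0)"
    using has_derivative_diff[OF has_derivative_mult[OF ppow_deriv[of x y n] has_derivative_const[of b]]
       has_derivative_mult[OF has_derivative_const[of b] ppow_deriv[of x y n]]] by simp
  have "(\<lambda>t::real. ppow (x + t *\<^sub>R y) n * b - b * ppow (x + t *\<^sub>R y) n) = (\<lambda>t. 0)"
    using assms by auto
  with d have "((\<lambda>t::real. 0) has_derivative (\<lambda>h. (h *\<^sub>R dpow x y n) * b - b * (h *\<^sub>R dpow x y n))) (at 0)"
    by simp
  from Deriv.has_derivative_zero_unique[OF this]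
  have "(1 *\<^sub>R dpow x y n) * b - b * (1 *\<^sub>R dpow x y n) = 0" by metis
  then show ?thesis by simp
qed

lemma deriv_zero:
  fixes x y :: "'a::real_normed_algebra"
  assumes "\<forall>t::real. ppow (x + t *\<^sub>R y) n = 0"
  shows "dpow x y n = 0"
proof -
  have "((\<lambda>t::real. 0) has_derivative (\<lambda>h. h *\<^sub>R dpow x y n)) (at 0)"
    using ppow_deriv[of x y n] assms by simp
  from Deriv.has_derivative_zero_unique[OF this] have "1 *\<^sub>R dpow x y n = 0" by metis
  then show ?thesis by simp
qed

lemma ppow_center: "(c::'a::real_normed_algebra) \<in> center \<Longrightarrow> ppow c n \<in> center"
  by (induction c n rule: ppow.induct) (auto intro: center_mult simp: center_zero)

lemma ppow_nonzero:
  fixes c :: "'a::real_normed_algebra"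
  assumes prime: "prime_alg TYPE('a)" and "c \<in> center" "c \<noteq> 0"
  shows "ppow c (Suc n) \<noteq> 0"
proof (induction n)
  case 0 then show ?case using assms by simp
next
  case (Suc n)
  then show ?case using prime_cancel[OF prime assms(2,3)] by auto
qed

lemma dpow_center:
  fixes c w :: "'a::real_normed_algebra"
  assumes "c \<in> center"
  shows "c * dpow c w (Suc n) = real (Suc n) *\<^sub>R (ppow c (Suc n) * w)"
proof (induction n)
  case 0 then show ?case by simp
next
  case (Suc n)
  have cn: "w * ppow c (Suc n) = ppow c (Suc n) * w"
    using ppow_center[OF assms, of "Suc n"] center_iff by metis
  have "c * dpow c w (Suc (Suc n)) = c * (ppow c (Suc n) * w) + c * (c * dpow c w (Suc n))"
    by (simp add: distrib_left cn mult.assoc)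
  also have "c * (c * dpow c w (Suc n)) = c * (real (Suc n) *\<^sub>R (ppow c (Suc n) * w))"
    using Suc by simp
  also have "\<dots> = real (Suc n) *\<^sub>R (ppow c (Suc (Suc n)) * w)"
    by (simp add: mult.assoc)
  also have "c * (ppow c (Suc n) * w) = ppow c (Suc (Suc n)) * w" by (simp add: mult.assoc)
  finally show ?case by (simp add: scaleR_add_left scaleR_2)
qed




lemma Zne_comm:
  fixes c w v :: "'a::real_normed_algebra"
  assumes prime: "prime_alg TYPE('a)" and cC: "c \<in> center" and c0: "c \<noteq> 0"
    and K: "\<forall>u v::'a. ppow u (Suc m) * ppow v (Suc m) = ppow v (Suc m) * ppow u (Suc m)"
  shows "w * v = v * w"
proof -
  let ?E = "Suc m"
  have cc: "\<And>x. c * x = x * c" using cC center_iff by blast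
  have D1: "dpow c w ?E * ppow v' ?E = ppow v' ?E * dpow c w ?E" for v' :: 'a
    by (rule deriv_comm) (use K in blast)
  have D2: "dpow c w ?E * dpow c v ?E = dpow c v ?E * dpow c w ?E"
    by (rule deriv_comm[symmetric]) (use D1 in metis)
  let ?cE = "ppow c ?E"
  have cEc: "?cE \<in> center" by (rule ppow_center[OF cC])
  have cE0: "?cE \<noteq> 0" by (rule ppow_nonzero[OF prime cC c0])
  have cEe: "\<And>x. ?cE * x = x * ?cE" using cEc center_iff by blast
  have e: "c * dpow c x ?E = real ?E *\<^sub>R (?cE * x)" for x :: 'a by (rule dpow_center[OF cC])
  have sw: "(c * A) * (c * B) = c * c * (A * B)" for A B :: 'a
  proof -
    have h1: "A * c = c * A" using cc by simp
    have "(c * A) * (c * B) = c * ((A * c) * B)" by (simp add: mult.assoc)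
    also have "\<dots> = c * c * (A * B)" unfolding h1 by (simp add: mult.assoc)
    finally show ?thesis .
  qed
  have "(c * dpow c w ?E) * (c * dpow c v ?E) = c * c * (dpow c w ?E * dpow c v ?E)"
    by (rule sw)
  also have "\<dots> = c * c * (dpow c v ?E * dpow c w ?E)" by (simp add: D2)
  also have "\<dots> = (c * dpow c v ?E) * (c * dpow c w ?E)"
    by (rule sw[symmetric])
  finally have "(?cE * w) * (?cE * v) = (?cE * v) * (?cE * w)"
    unfolding e by simp
  moreover have sw2: "(?cE * A) * (?cE * B) = ?cE * (?cE * (A * B))" for A B :: 'a
  proof -
    have h1: "A * ?cE = ?cE * A" using cEe by simp
    have "(?cE * A) * (?cE * B) = ?cE * ((A * ?cE) * B)" by (simp add: mult.assoc)
    also have "\<dots> = ?cE * (?cE * (A * B))" unfolding h1 by (simp add: mult.assoc)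
    finally show ?thesis .
  qed
  ultimately have "?cE * (?cE * (w * v - v * w)) = 0"
    by (simp add: right_diff_distrib)
  then have "?cE * (w * v - v * w) = 0" using prime_cancel[OF prime cEc cE0] by blast
  then have "w * v - v * w = 0" using prime_cancel[OF prime cEc cE0] by blast
  then show ?thesis by simp
qed

lemma nil_zero:
  fixes x :: "'a::real_normed_algebra"
  assumes prime: "prime_alg TYPE('a)"
  shows "\<forall>x::'a. ppow x (Suc n) = 0 \<Longrightarrow> x = 0"
proof (induction n arbitrary: x)
  case 0 then show ?case by simp
next
  case (Suc n)
  have "ppow z (Suc n) = 0" for z :: 'a
  proof -
    have "ppow z (Suc n) * y * ppow z (Suc n) = 0" for y :: 'a
    proof -
      have d: "dpow z y (Suc (Suc n)) = 0"
        by (rule deriv_zero) (use Suc.prems in blast)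
      have zz: "ppow z (Suc n) * z = 0"
        using ppow_add[of "Suc n" 1 z] Suc.prems by simp
      have "ppow z (Suc n) * dpow z y (Suc (Suc n)) = ppow z (Suc n) * y * ppow z (Suc n) + ppow z (Suc n) * z * dpow z y (Suc n)"
        by (simp add: distrib_left mult.assoc)
      then show ?thesis using d zz by simp
    qed
    then show ?thesis using prime unfolding prime_alg_def by blast
  qed
  then show ?case using Suc.IH by blast
qed

lemma alg_main:
  fixes f :: "'a::real_normed_algebra \<Rightarrow> 'a" and x y :: 'a
  assumes prime: "prime_alg TYPE('a)" and fm: "\<forall>x y. f (x * y) = f x * f y"
    and pq: "0 < p" "0 < q"
    and H: "\<forall>x y. f (ppow x p * ppow y q) + jordan (ppow x p) (ppow y q) \<in> center"
  shows "x * y = y * x"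
proof (cases "\<exists>c\<in>center. c \<noteq> (0::'a)")
  case True
  then obtain c :: 'a where c: "c \<in> center" "c \<noteq> 0" by blast
  let ?E = "p*q*(p+q)"
  have Epos: "0 < ?E" using pq by simp
  then obtain m where m: "?E = Suc m" using gr0_conv_Suc by blast
  have K: "\<forall>u v::'a. ppow u (Suc m) * ppow v (Suc m) = ppow v (Suc m) * ppow u (Suc m)"
    using comm_powers[OF prime fm pq H] unfolding m by blast
  show ?thesis by (rule Zne_comm[OF prime c K])
next
  case False
  then have Z: "\<And>c::'a. c \<in> center \<Longrightarrow> c = 0" by blast
  let ?E = "p*q*(p+q)"
  have Epos: "0 < ?E" using pq by simp
  have fa: "f (ppow w ?E) = - (ppow w ?E + ppow w ?E)" for w :: 'a
    using Z[OF G_lemma[OF pq H, of w]] by (metis eq_neg_iff_add_eq_0)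
  have sq: "ppow (ppow w 2) ?E = ppow w ?E * ppow w ?E" for w :: 'a
    using ppow_mult[of 2 ?E w] ppow_add[OF Epos Epos, of w] Epos by (simp add: mult_2)
  have N: "ppow w (Suc (2 * ?E - 1)) = 0" for w :: 'a
  proof -
    let ?a = "ppow w ?E"
    have h1: "f (?a * ?a) = - (?a * ?a + ?a * ?a)" using fa[of "ppow w 2"] unfolding sq .
    moreover have h2: "f (?a * ?a) = (?a + ?a) * (?a + ?a)" 
    proof -
      have "f (?a * ?a) = f ?a * f ?a" using fm by blast
      also have "\<dots> = (- (?a + ?a)) * (- (?a + ?a))" using fa[of w] by simp
      also have "\<dots> = (?a + ?a) * (?a + ?a)" by (rule minus_mult_minus)
      finally show ?thesis .
    qed
    ultimately have "6 *\<^sub>R (?a * ?a) = 0"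
    proof -
      have s6: "(6::real) *\<^sub>R x = 4 *\<^sub>R x + 2 *\<^sub>R x" for x :: 'a by (simp flip: scaleR_add_left)
      have "(?a + ?a) * (?a + ?a) + (?a * ?a + ?a * ?a) = 0" using h1 h2 by (metis add.commute add_eq_0_iff2)
      then show ?thesis unfolding s6 scaleR_four scaleR_2 by (simp add: algebra_simps)
    qed
    then have "?a * ?a = 0" by simp
    moreover have "?a * ?a = ppow w (Suc (2 * ?E - 1))"
      using ppow_add[OF Epos Epos, of w] Epos by (simp add: mult_2)
    ultimately show ?thesis by simp
  qed
  have "\<And>z::'a. z = 0" using nil_zero[OF prime] N by blast
  then show ?thesis by metis
qed




lemma additive_cont_scaleR:
  fixes f :: "'a::real_normed_vector \<Rightarrow> 'b::real_normed_vector"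
  assumes add: "\<forall>x y. f (x + y) = f x + f y" and cont: "continuous_on UNIV f"
  shows "f (r *\<^sub>R x) = r *\<^sub>R f x"
proof -
  have f0: "f 0 = 0" using add[rule_format, of 0 0] by simp
  have fneg: "f (- z) = - f z" for z
    using add[rule_format, of z "- z"] f0 by (simp add: eq_neg_iff_add_eq_0 add.commute)
  have fnat: "f (real n *\<^sub>R z) = real n *\<^sub>R f z" for n z
  proof (induction n)
    case 0 then show ?case by (simp add: f0)
  next
    case (Suc n)
    have "f (real (Suc n) *\<^sub>R z) = f (real n *\<^sub>R z + z)" by (simp add: scaleR_add_left add.commute)
    also have "\<dots> = f (real n *\<^sub>R z) + f z" using add by blast
    finally show ?case using Suc by (simp add: scaleR_add_left)
  qed
  have fint: "f (real_of_int k *\<^sub>R z) = real_of_int k *\<^sub>R f z" for k z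
  proof (cases "k \<ge> 0")
    case True
    define n where "n = nat k"
    have "k = int n" using True by (simp add: n_def)
    then show ?thesis using fnat by simp
  next
    case False
    define n where "n = nat (- k)"
    have "k = - int n" using False by (simp add: n_def)
    then have "f (real_of_int k *\<^sub>R z) = f (- (real n *\<^sub>R z))" by simp
    also have "\<dots> = - (real n *\<^sub>R f z)" using fnat fneg by metis
    finally show ?thesis using \<open>k = - int n\<close> by simp
  qed
  have frat: "f (s *\<^sub>R x) = s *\<^sub>R f x" if sQ: "s \<in> \<rat>" for s
  proof -
    obtain a b where ab: "b > 0" "s = of_int a / of_int b" using Rats_cases'[OF sQ] by metis
    have "real_of_int b *\<^sub>R f (s *\<^sub>R x) = f (real_of_int b *\<^sub>R (s *\<^sub>R x))" by (simp only: fint)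
    also have "real_of_int b *\<^sub>R (s *\<^sub>R x) = real_of_int a *\<^sub>R x" using ab by simp
    also have "f \<dots> = real_of_int a *\<^sub>R f x" by (simp add: fint)
    finally have "real_of_int b *\<^sub>R f (s *\<^sub>R x) = real_of_int a *\<^sub>R f x" .
    then have eq: "real_of_int b *\<^sub>R f (s *\<^sub>R x) = real_of_int a *\<^sub>R f x" .
    have "f (s *\<^sub>R x) = (1 / real_of_int b) *\<^sub>R (real_of_int b *\<^sub>R f (s *\<^sub>R x))"
      using ab by simp
    also have "\<dots> = (1 / real_of_int b) *\<^sub>R (real_of_int a *\<^sub>R f x)" by (simp only: eq)
    also have "\<dots> = s *\<^sub>R f x" using ab by simp
    finally show ?thesis .
  qed
  have cl: "closed {s::real. f (s *\<^sub>R x) = s *\<^sub>R f x}"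
  proof (rule closed_Collect_eq)
    show "continuous_on UNIV (\<lambda>s::real. f (s *\<^sub>R x))"
      by (rule continuous_on_compose2[OF cont]) (auto intro!: continuous_intros)
  qed (auto intro!: continuous_intros)
  have "\<rat> \<subseteq> {s::real. f (s *\<^sub>R x) = s *\<^sub>R f x}" using frat by blast
  from closure_minimal[OF this cl] have "UNIV \<subseteq> {s::real. f (s *\<^sub>R x) = s *\<^sub>R f x}"
    by (simp add: Rats_closure_real)
  then show ?thesis by blast
qed




fun pev :: "(nat \<times> 'a::real_normed_algebra) list \<Rightarrow> real \<Rightarrow> 'a" where
  "pev [] t = 0"
| "pev ((k, c) # A) t = t ^ k *\<^sub>R c + pev A t"

definition polyf :: "(real \<Rightarrow> 'a::real_normed_algebra) \<Rightarrow> bool" where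
  "polyf g \<longleftrightarrow> (\<exists>A. \<forall>t. g t = pev A t)"

lemma pev_append: "pev (A @ B) t = pev A t + pev B t"
  by (induction A) (auto simp: algebra_simps)

lemma pev_lmul: "pev (map (\<lambda>(j, d). (k + j, c * d)) B) t = (t ^ k *\<^sub>R c) * pev B t"
  by (induction B) (auto simp: algebra_simps power_add)

lemma pev_mul: "pev (concat (map (\<lambda>(k, c). map (\<lambda>(j, d). (k + j, c * d)) B) A)) t = pev A t * pev B t"
  by (induction A) (auto simp: pev_append pev_lmul algebra_simps)

lemma pev_map:
  assumes add: "\<forall>x y. L (x + y) = L x + L y" and hom: "\<forall>r x. L (r *\<^sub>R x) = r *\<^sub>R L x"
  shows "pev (map (\<lambda>(k, c). (k, L c)) A) t = L (pev A t)"
proof (induction A)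
  case Nil
  have "L 0 = 0" using hom[rule_format, of 0 0] by simp
  then show ?case by simp
next
  case (Cons a A)
  then show ?case by (cases a) (simp add: add hom)
qed

lemma polyf_const: "polyf (\<lambda>t. a)"
  unfolding polyf_def by (rule exI[of _ "[(0, a)]"]) simp

lemma polyf_lin: "polyf (\<lambda>t. t *\<^sub>R d)"
  unfolding polyf_def by (rule exI[of _ "[(1, d)]"]) simp

lemma polyf_add:
  assumes "polyf g" "polyf h" shows "polyf (\<lambda>t. g t + h t)"
proof -
  obtain A where A: "\<forall>t. g t = pev A t" using assms(1) polyf_def by blast
  obtain B where B: "\<forall>t. h t = pev B t" using assms(2) polyf_def by blast
  show ?thesis unfolding polyf_def by (rule exI[of _ "A @ B"]) (simp add: pev_append A B)
qed

lemma polyf_mult: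
  assumes "polyf g" "polyf h" shows "polyf (\<lambda>t. g t * h t)"
proof -
  obtain A where A: "\<forall>t. g t = pev A t" using assms(1) polyf_def by blast
  obtain B where B: "\<forall>t. h t = pev B t" using assms(2) polyf_def by blast
  show ?thesis unfolding polyf_def
    by (rule exI[of _ "concat (map (\<lambda>(k, c). map (\<lambda>(j, d). (k + j, c * d)) B) A)"]) (simp add: pev_mul A B)
qed

lemma polyf_map:
  assumes "\<forall>x y. L (x + y) = L x + L y" "\<forall>r x. L (r *\<^sub>R x) = r *\<^sub>R L x" "polyf g"
  shows "polyf (\<lambda>t. L (g t))"
proof -
  obtain A where A: "\<forall>t. g t = pev A t" using assms(3) polyf_def by blast
  show ?thesis unfolding polyf_def
    by (rule exI[of _ "map (\<lambda>(k, c). (k, L c)) A"]) (simp add: pev_map[OF assms(1,2)] A)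
qed

lemma polyf_scale: "polyf g \<Longrightarrow> polyf (\<lambda>t. r *\<^sub>R g t)"
  using polyf_map[of "\<lambda>x. r *\<^sub>R x" g] by (simp add: scaleR_add_right)

lemma polyf_diff: "polyf g \<Longrightarrow> polyf h \<Longrightarrow> polyf (\<lambda>t. g t - h t)"
  using polyf_add[of g "\<lambda>t. (-1) *\<^sub>R h t"] polyf_scale[of h "-1"] by simp

lemma polyf_ppow: "polyf g \<Longrightarrow> polyf (\<lambda>t. ppow (g t) n)"
proof (induction n rule: nat_less_induct)
  case (1 n)
  show ?case
  proof (cases n)
    case 0 then show ?thesis using polyf_const[of 0] by simp
  next
    case (Suc k)
    show ?thesis
    proof (cases k)
      case 0 then show ?thesis using Suc 1 by simp
    next
      case (Suc j)
      then have "polyf (\<lambda>t. ppow (g t) (Suc j))" using 1 \<open>n = Suc k\<close> by simp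
      then have "polyf (\<lambda>t. g t * ppow (g t) (Suc j))" using polyf_mult 1 by blast
      then show ?thesis using Suc \<open>n = Suc k\<close> by simp
    qed
  qed
qed

fun cf :: "(nat \<times> 'a::real_normed_algebra) list \<Rightarrow> nat \<Rightarrow> 'a" where
  "cf [] k = 0"
| "cf ((j, c) # A) k = (if j = k then c else 0) + cf A k"

lemma pev_cf: "(\<forall>x\<in>set A. fst x < n) \<Longrightarrow> pev A t = (\<Sum>k<n. t ^ k *\<^sub>R cf A k)"
proof (induction A)
  case Nil then show ?case by simp
next
  case (Cons a A)
  obtain j c where a: "a = (j, c)" by force
  have jn: "j < n" using Cons.prems a by simp
  have "(\<Sum>k<n. t ^ k *\<^sub>R cf (a # A) k) = (\<Sum>k<n. t ^ k *\<^sub>R (if j = k then c else 0)) + (\<Sum>k<n. t ^ k *\<^sub>R cf A k)"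
    by (simp add: a scaleR_add_right sum.distrib)
  also have "(\<Sum>k<n. t ^ k *\<^sub>R (if j = k then c else 0)) = t ^ j *\<^sub>R c"
    using jn by (simp add: if_distrib cong: if_cong)
  finally show ?case using Cons by (simp add: a)
qed

lemma coef_vanish:
  fixes c :: "nat \<Rightarrow> 'a::real_normed_vector"
  assumes "0 < \<delta>"
  shows "(\<forall>t. \<bar>t\<bar> < \<delta> \<longrightarrow> (\<Sum>k<n. t ^ k *\<^sub>R c k) = 0) \<Longrightarrow> \<forall>k<n. c k = 0"
proof (induction n arbitrary: c)
  case 0 then show ?case by simp
next
  case (Suc n)
  have split: "(\<Sum>k<Suc n. t ^ k *\<^sub>R c k) = c 0 + t *\<^sub>R (\<Sum>k<n. t ^ k *\<^sub>R c (Suc k))" for t :: real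
    by (subst sum.lessThan_Suc_shift) (simp add: scaleR_sum_right del: sum.lessThan_Suc)
  have c0: "c 0 = 0"
  proof -
    have "(\<Sum>k<Suc n. (0::real) ^ k *\<^sub>R c k) = 0" using Suc.prems assms by auto
    then have "c 0 + (0::real) *\<^sub>R (\<Sum>k<n. (0::real) ^ k *\<^sub>R c (Suc k)) = 0" by (simp only: split)
    then show ?thesis by simp
  qed
  let ?S = "\<lambda>t::real. (\<Sum>k<n. t ^ k *\<^sub>R c (Suc k))"
  have Snz: "?S t = 0" if "t \<noteq> 0" "\<bar>t\<bar> < \<delta>" for t
  proof -
    have "(\<Sum>k<Suc n. t ^ k *\<^sub>R c k) = 0" using Suc.prems that by auto
    then have "c 0 + t *\<^sub>R ?S t = 0" by (simp only: split)
    then show ?thesis using c0 that by simp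
  qed
  have "(?S \<longlongrightarrow> ?S 0) (at 0)"
    by (intro tendsto_intros)
  moreover have "eventually (\<lambda>t. ?S t = 0) (at (0::real))"
    unfolding eventually_at by (rule exI[of _ \<delta>]) (use assms Snz in \<open>auto simp: dist_real_def\<close>)
  then have "(?S \<longlongrightarrow> 0) (at 0)" by (rule tendsto_eventually)
  ultimately have S0: "?S 0 = 0" by (rule tendsto_unique[rotated]) simp
  have "\<forall>t. \<bar>t\<bar> < \<delta> \<longrightarrow> ?S t = 0"
  proof (intro allI impI)
    fix t :: real assume "\<bar>t\<bar> < \<delta>"
    then show "?S t = 0" using Snz[of t] S0 by (cases "t = 0") simp_all
  qed
  from Suc.IH[of "\<lambda>k. c (Suc k)", OF this] have "\<forall>k<n. c (Suc k) = 0" .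
  then show ?case using c0 by (auto simp: less_Suc_eq_0_disj)
qed

lemma polyf_vanish:
  assumes "polyf g" "0 < \<delta>" "\<forall>t. \<bar>t\<bar> < \<delta> \<longrightarrow> g t = 0"
  shows "g s = 0"
proof -
  obtain A where A: "\<forall>t. g t = pev A t" using assms(1) polyf_def by blast
  define n where "n = Suc (sum_list (map fst A))"
  have bnd: "\<forall>x\<in>set A. fst x < n"
  proof
    fix x assume "x \<in> set A"
    then have "fst x \<in> set (map fst A)" by simp
    then have "fst x \<le> sum_list (map fst A)" by (rule member_le_sum_list) simp
    then show "fst x < n" unfolding n_def by simp
  qed
  have "\<forall>t. \<bar>t\<bar> < \<delta> \<longrightarrow> (\<Sum>k<n. t ^ k *\<^sub>R cf A k) = 0"
  proof (intro allI impI)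
    fix t :: real assume "\<bar>t\<bar> < \<delta>"
    then have "g t = 0" using assms(3) by blast
    then show "(\<Sum>k<n. t ^ k *\<^sub>R cf A k) = 0" using A pev_cf[OF bnd, of t] by simp
  qed
  from coef_vanish[OF assms(2) this] have "\<forall>k<n. cf A k = 0" .
  then show ?thesis using A pev_cf[OF bnd, of s] by simp
qed




lemma polyf_Phi:
  fixes f :: "'a::real_normed_algebra \<Rightarrow> 'a"
  assumes fadd: "\<forall>x y. f (x + y) = f x + f y" and fhom: "\<forall>r x. f (r *\<^sub>R x) = r *\<^sub>R f x"
    and g: "polyf g" and h: "polyf h"
  shows "polyf (\<lambda>t. f (ppow (g t) p * ppow (h t) q) + jordan (ppow (g t) p) (ppow (h t) q))"
proof -
  have gp: "polyf (\<lambda>t. ppow (g t) p)" by (rule polyf_ppow[OF g])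
  have hq: "polyf (\<lambda>t. ppow (h t) q)" by (rule polyf_ppow[OF h])
  have m1: "polyf (\<lambda>t. ppow (g t) p * ppow (h t) q)" by (rule polyf_mult[OF gp hq])
  have m2: "polyf (\<lambda>t. ppow (h t) q * ppow (g t) p)" by (rule polyf_mult[OF hq gp])
  have fm: "polyf (\<lambda>t. f (ppow (g t) p * ppow (h t) q))" by (rule polyf_map[OF fadd fhom m1])
  show ?thesis unfolding jordan_def
    by (intro polyf_add fm m1 m2)
qed

lemma extend1:
  fixes \<Psi> :: "'a::real_normed_algebra \<Rightarrow> 'a"
  assumes poly: "\<And>x d. polyf (\<lambda>t. \<Psi> (x + t *\<^sub>R d))" and r: "0 < r"
    and loc: "\<forall>x\<in>ball x0 r. \<Psi> x \<in> center"
  shows "\<Psi> x \<in> center"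
  unfolding center_iff
proof
  fix z
  let ?g = "\<lambda>t. \<Psi> (x0 + t *\<^sub>R (x - x0)) * z - z * \<Psi> (x0 + t *\<^sub>R (x - x0))"
  have pg: "polyf ?g"
    by (intro polyf_diff polyf_mult poly polyf_const)
  define \<delta> where "\<delta> = r / (norm (x - x0) + 1)"
  have dpos: "0 < \<delta>" using r unfolding \<delta>_def by (intro divide_pos_pos) (auto intro: add_nonneg_pos)
  have np: "0 < norm (x - x0) + 1" by (simp add: add_nonneg_pos)
  have "?g t = 0" if "\<bar>t\<bar> < \<delta>" for t
  proof -
    have "\<bar>t\<bar> * norm (x - x0) \<le> \<bar>t\<bar> * (norm (x - x0) + 1)" by (simp add: mult_left_mono)
    also have "\<dots> < \<delta> * (norm (x - x0) + 1)"
      using that np by (intro mult_strict_right_mono) auto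
    also have "\<dots> = r" using np by (simp add: \<delta>_def)
    finally have "dist x0 (x0 + t *\<^sub>R (x - x0)) < r" by (simp add: dist_norm)
    then have "\<Psi> (x0 + t *\<^sub>R (x - x0)) \<in> center" using loc by simp
    then show ?thesis unfolding center_iff by simp
  qed
  then have "?g 1 = 0" using polyf_vanish[OF pg dpos] by blast
  then show "\<Psi> x * z = z * \<Psi> x" by simp
qed

lemma extend:
  fixes f :: "'a::real_normed_algebra \<Rightarrow> 'a"
  assumes fadd: "\<forall>x y. f (x + y) = f x + f y" and fhom: "\<forall>r x. f (r *\<^sub>R x) = r *\<^sub>R f x"
    and r: "0 < r"
    and loc: "\<forall>x\<in>ball x0 r. \<forall>y\<in>ball y0 r. f (ppow x p * ppow y q) + jordan (ppow x p) (ppow y q) \<in> center"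
  shows "\<forall>x y. f (ppow x p * ppow y q) + jordan (ppow x p) (ppow y q) \<in> center"
proof (intro allI)
  fix x y :: 'a
  have lin: "polyf (\<lambda>t. a + t *\<^sub>R d)" for a d :: 'a by (intro polyf_add polyf_const polyf_lin)
  have s1: "f (ppow x' p * ppow y' q) + jordan (ppow x' p) (ppow y' q) \<in> center" if "y' \<in> ball y0 r" for x' y'
  proof (rule extend1[where \<Psi> = "\<lambda>x. f (ppow x p * ppow y' q) + jordan (ppow x p) (ppow y' q)", OF _ r])
    show "polyf (\<lambda>t. f (ppow (x + t *\<^sub>R d) p * ppow y' q) + jordan (ppow (x + t *\<^sub>R d) p) (ppow y' q))" for x d
      by (rule polyf_Phi[OF fadd fhom lin polyf_const])
    show "\<forall>x\<in>ball x0 r. f (ppow x p * ppow y' q) + jordan (ppow x p) (ppow y' q) \<in> center"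
      using loc that by blast
  qed
  show "f (ppow x p * ppow y q) + jordan (ppow x p) (ppow y q) \<in> center"
  proof (rule extend1[where \<Psi> = "\<lambda>y. f (ppow x p * ppow y q) + jordan (ppow x p) (ppow y q)", OF _ r])
    show "polyf (\<lambda>t. f (ppow x p * ppow (y + t *\<^sub>R d) q) + jordan (ppow x p) (ppow (y + t *\<^sub>R d) q))" for y d
      by (rule polyf_Phi[OF fadd fhom polyf_const lin])
    show "\<forall>y\<in>ball y0 r. f (ppow x p * ppow y q) + jordan (ppow x p) (ppow y q) \<in> center"
      using s1 by blast
  qed
qed




lemma continuous_on_ppow:
  fixes g :: "'b::topological_space \<Rightarrow> 'a::real_normed_algebra"
  assumes "continuous_on S g"
  shows "continuous_on S (\<lambda>z. ppow (g z) n)"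
proof (induction n rule: nat_less_induct)
  case (1 n)
  show ?case
  proof (cases n)
    case 0 then show ?thesis by simp
  next
    case (Suc k)
    show ?thesis
    proof (cases k)
      case 0 then show ?thesis using Suc assms by simp
    next
      case (Suc j)
      then have "continuous_on S (\<lambda>z. ppow (g z) (Suc j))" using 1 \<open>n = Suc k\<close> by simp
      then have "continuous_on S (\<lambda>z. g z * ppow (g z) (Suc j))" using assms by (intro continuous_intros)
      then show ?thesis using Suc \<open>n = Suc k\<close> by simp
    qed
  qed
qed

lemma baire_step:
  fixes f :: "'a::{real_normed_algebra, banach} \<Rightarrow> 'a"
    and H1 H2 :: "'a set"
  assumes "open H1" and "H1 \<noteq> {}"
    and "open H2" and "H2 \<noteq> {}"
    and cont: "continuous_on UNIV f"
    and cond: "\<forall>x\<in>H1. \<forall>y\<in>H2. \<exists>p q::nat. p > 0 \<and> q > 0 \<and>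
           f (ppow x p * ppow y q) + jordan (ppow x p) (ppow y q) \<in> center"
  shows "\<exists>p q x0 y0 r. p > 0 \<and> q > 0 \<and> r > 0 \<and>
     (\<forall>x\<in>ball x0 r. \<forall>y\<in>ball y0 r. f (ppow x p * ppow y q) + jordan (ppow x p) (ppow y q) \<in> center)"
proof -
  define H where "H = H1 \<times> H2"
  have Hopen: "open H" unfolding H_def using assms by (simp add: open_Times)
  have Hne: "H \<noteq> {}" unfolding H_def using assms by simp
  define \<Phi> where "\<Phi> p q z = f (ppow (fst z) p * ppow (snd z) q) + jordan (ppow (fst z) p) (ppow (snd z) q)"
    for p q and z :: "'a \<times> 'a"
  define C where "C p q = {z. \<Phi> p q z \<in> center}" for p q
  have contPhi: "continuous_on UNIV (\<Phi> p q)" for p q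
  proof -
    have a: "continuous_on UNIV (\<lambda>z::'a\<times>'a. ppow (fst z) p)"
      by (intro continuous_on_ppow continuous_intros)
    have b: "continuous_on UNIV (\<lambda>z::'a\<times>'a. ppow (snd z) q)"
      by (intro continuous_on_ppow continuous_intros)
    have c: "continuous_on UNIV (\<lambda>z::'a\<times>'a. f (ppow (fst z) p * ppow (snd z) q))"
      by (rule continuous_on_compose2[OF cont]) (use a b in \<open>auto intro!: continuous_intros\<close>)
    show ?thesis unfolding \<Phi>_def jordan_def using a b c by (intro continuous_intros)
  qed
  have Cclosed: "closed (C p q)" for p q
  proof -
    have "C p q = (\<Inter>w. {z. \<Phi> p q z * w = w * \<Phi> p q z})"
      unfolding C_def center_iff by blast
    moreover have "closed {z. \<Phi> p q z * w = w * \<Phi> p q z}" for w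
      by (rule closed_Collect_eq) (use contPhi[of p q] in \<open>auto intro!: continuous_intros\<close>)
    ultimately show ?thesis by auto
  qed
  let ?X = "top_of_set H"
  define \<G> where "\<G> = (\<lambda>(p, q). H \<inter> C p q) ` ({p. 0 < p} \<times> {q. 0 < q})"
  have UG: "\<Union>\<G> = H"
  proof
    show "\<Union>\<G> \<subseteq> H" unfolding \<G>_def by auto
    show "H \<subseteq> \<Union>\<G>"
    proof
      fix z assume "z \<in> H"
      then obtain x y where z: "z = (x, y)" "x \<in> H1" "y \<in> H2" unfolding H_def by auto
      then obtain p q where pq: "p > 0" "q > 0" "f (ppow x p * ppow y q) + jordan (ppow x p) (ppow y q) \<in> center"
        using cond by blast
      then have "z \<in> H \<inter> C p q" using \<open>z \<in> H\<close> z unfolding C_def \<Phi>_def by simp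
      then show "z \<in> \<Union>\<G>" unfolding \<G>_def using pq by blast
    qed
  qed
  have "\<exists>p q. 0 < p \<and> 0 < q \<and> ?X interior_of (H \<inter> C p q) \<noteq> {}"
  proof (rule ccontr)
    assume na: "\<not> ?thesis"
    have "?X interior_of \<Union>\<G> = {}"
    proof (rule Baire_category_alt)
      show "completely_metrizable_space ?X \<or> locally_compact_space ?X \<and> regular_space ?X"
        using completely_metrizable_space_openin[OF completely_metrizable_space_euclidean, of H] Hopen
        by simp
      show "countable \<G>" unfolding \<G>_def by simp
      fix T assume "T \<in> \<G>"
      then obtain p q where pqT: "0 < p" "0 < q" "T = H \<inter> C p q" unfolding \<G>_def by auto
      have "closedin ?X (H \<inter> C p q)" by (rule closedin_closed_Int[OF Cclosed])
      moreover have "?X interior_of (H \<inter> C p q) = {}" using na pqT(1,2) by blast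
      ultimately show "closedin ?X T \<and> ?X interior_of T = {}" using pqT(3) by simp
    qed
    moreover have "?X interior_of H = H"
      using interior_of_topspace[of ?X] by simp
    ultimately show False using UG Hne by simp
  qed
  then obtain p q where pq: "0 < p" "0 < q" and ne: "?X interior_of (H \<inter> C p q) \<noteq> {}" by blast
  define Ob where "Ob = ?X interior_of (H \<inter> C p q)"
  have "openin ?X Ob" unfolding Ob_def by simp
  then have Oopen: "open Ob" using Hopen openin_open_trans by blast
  have Osub: "Ob \<subseteq> C p q" unfolding Ob_def using interior_of_subset[of ?X "H \<inter> C p q"] by simp
  obtain z where "z \<in> Ob" using ne unfolding Ob_def by auto
  then obtain A B where AB: "open A" "open B" "z \<in> A \<times> B" "A \<times> B \<subseteq> Ob"
    using open_prod_elim[OF Oopen \<open>z \<in> Ob\<close>] by blast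
  have zA: "fst z \<in> A" and zB: "snd z \<in> B" using AB(3) by (auto simp: mem_Times_iff)
  obtain r1 where r1: "r1 > 0" "ball (fst z) r1 \<subseteq> A" using open_contains_ball_eq[OF AB(1)] zA by blast
  obtain r2 where r2: "r2 > 0" "ball (snd z) r2 \<subseteq> B" using open_contains_ball_eq[OF AB(2)] zB by blast
  define r where "r = min r1 r2"
  have "\<forall>x\<in>ball (fst z) r. \<forall>y\<in>ball (snd z) r. f (ppow x p * ppow y q) + jordan (ppow x p) (ppow y q) \<in> center"
  proof (intro ballI)
    fix x y assume "x \<in> ball (fst z) r" "y \<in> ball (snd z) r"
    then have "(x, y) \<in> A \<times> B" using r1 r2 unfolding r_def by auto
    then have "(x, y) \<in> C p q" using AB Osub by blast
    then show "f (ppow x p * ppow y q) + jordan (ppow x p) (ppow y q) \<in> center"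
      unfolding C_def \<Phi>_def by simp
  qed
  moreover have "r > 0" using r1 r2 unfolding r_def by simp
  ultimately show ?thesis using pq by blast
qed

theorem theorem2p2:
  fixes f :: "'a::{real_normed_algebra, banach} \<Rightarrow> 'a"
    and H1 H2 :: "'a set"
  assumes "prime_alg TYPE('a)"
    and "open H1" and "H1 \<noteq> {}"
    and "open H2" and "H2 \<noteq> {}"
    and "automorphism f"
    and "continuous_on UNIV f"
    and "\<forall>x\<in>H1. \<forall>y\<in>H2. \<exists>p q::nat. p > 0 \<and> q > 0 \<and>
           f (ppow x p * ppow y q) + jordan (ppow x p) (ppow y q) \<in> center"
  shows "\<forall>x y::'a. x * y = y * x"
proof -
  have fadd: "\<forall>x y. f (x + y) = f x + f y" and fm: "\<forall>x y. f (x * y) = f x * f y"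
    using assms(6) unfolding automorphism_def by blast+
  have fhom: "\<forall>r x. f (r *\<^sub>R x) = r *\<^sub>R f x"
    using additive_cont_scaleR[OF fadd assms(7)] by blast
  obtain p q x0 y0 r where pq: "p > 0" "q > 0" "r > 0"
    and loc: "\<forall>x\<in>ball x0 r. \<forall>y\<in>ball y0 r. f (ppow x p * ppow y q) + jordan (ppow x p) (ppow y q) \<in> center"
    using baire_step[OF assms(2-5,7,8)] by blast
  have all: "\<forall>x y. f (ppow x p * ppow y q) + jordan (ppow x p) (ppow y q) \<in> center"
    by (rule extend[OF fadd fhom pq(3) loc])
  show ?thesis using alg_main[OF assms(1) fm pq(1,2) all] by blast
qed


end
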